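(* For integers $n\ge1$, $\alpha\ge0$ and real (or complex) $a\ne b$, define $$Q_n(a,b,\alpha)=\int_{[0,\infty)^n}\prod_{i=1}^n(a-y_i)(b-y_i)^{\alpha}e^{-y_i}\,\Delta_n^2(\mathbf{y})\,dy_1\cdots dy_n.$$ Then $$Q_n(a,b,\alpha)=\frac{\overline{\mathcal{K}}_{n,\alpha}}{(b-a)^{\alpha}}\det\Big[L^{(0)}_{n+i-1}(a)\;\;\;L^{(j-2)}_{n+i+1-j}(b)\Big]_{\substack{i=1,\dots,\alpha+1\\ j=2,\dots,\alpha+1}},\qquad \overline{\mathcal{K}}_{n,\alpha}=(-1)^{n+\alpha(n+\alpha)}\frac{\prod_{i=1}^{\alpha+1}(n+i-1)!\,\prod_{i=0}^{n-1}i!\,(i+1)!}{\prod_{i=1}^{\alpha-1}i!}.$$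
   Context: $\Delta_n(\mathbf{y})=\prod_{1\le i<k\le n}(y_k-y_i)$. $L^{(\rho)}_M(z)=\frac{(\rho+1)_M}{M!}\sum_{j=0}^M\frac{(-M)_j}{(\rho+1)_j}\frac{z^j}{j!}$ is the generalized Laguerre polynomial, $(a)_k$ the Pochhammer symbol. Empty products equal $1$. $\det[A_i\;\;B_{i,j}]_{i=1,\dots,\alpha+1;\,j=2,\dots,\alpha+1}$ denotes the determinant of the $(\alpha+1)\times(\alpha+1)$ matrix with first column $(A_i)$ and $j$-th column $(B_{i,j})$ for $j=2,\dots,\alpha+1$. *)

theory Defs
  imports "HOL-Probability.Probability" "Jordan_Normal_Form.Determinant"
begin

definition vdm :: "nat \<Rightarrow> (nat \<Rightarrow> real) \<Rightarrow> real" where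
  "vdm n y = (\<Prod>k<n. \<Prod>i<k. (y k - y i))"

text \<open>Generalized Laguerre polynomial L^(rho)_M(z); by the standard convention
  it is 0 for negative degree M.\<close>
definition laguerre :: "nat \<Rightarrow> int \<Rightarrow> real \<Rightarrow> real" where
  "laguerre rho M z = (if M < 0 then 0 else
     pochhammer (real rho + 1) (nat M) / fact (nat M) *
     (\<Sum>j=0..nat M. pochhammer (- real_of_int M) j / pochhammer (real rho + 1) j
                      * z ^ j / fact j))"

definition Q :: "nat \<Rightarrow> real \<Rightarrow> real \<Rightarrow> nat \<Rightarrow> real" where
  "Q n a b \<alpha> = (\<integral>y. indicator {y. \<forall>i<n. 0 \<le> y i} y *
      (\<Prod>i<n. (a - y i) * (b - y i) ^ \<alpha> * exp (- y i)) * (vdm n y)\<^sup>2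
      \<partial>(PiM {..<n} (\<lambda>_. lborel)))"

definition Kbar :: "nat \<Rightarrow> nat \<Rightarrow> real" where
  "Kbar n \<alpha> = (-1) ^ (n + \<alpha> * (n + \<alpha>)) *
     ((\<Prod>i=1..\<alpha>+1. fact (n + i - 1)) * (\<Prod>i=0..<n. fact i * fact (i + 1)))
     / (\<Prod>i=1..<\<alpha>. fact i)"

end

theory Submission
  imports Defs
begin


definition lagc :: "nat \<Rightarrow> nat \<Rightarrow> nat \<Rightarrow> real" where
  "lagc \<rho> M l = (-1)^l * real ((M+\<rho>) choose (M-l)) / fact l"

definition lagp :: "nat \<Rightarrow> nat \<Rightarrow> real poly" where
  "lagp \<rho> M = (\<Sum>l\<le>M. monom (lagc \<rho> M l) l)"

lemma poly_lagp: "poly (lagp \<rho> M) z = (\<Sum>l\<le>M. lagc \<rho> M l * z^l)"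
  by (simp add: lagp_def poly_sum poly_monom)

lemma coeff_lagp: "coeff (lagp \<rho> M) l = (if l \<le> M then lagc \<rho> M l else 0)"
  by (simp add: lagp_def coeff_sum coeff_monom)

lemma fact_add_poch: "(fact (r + k) :: real) = fact r * pochhammer (real r + 1) k"
proof -
  have "(fact (r + k) :: real) = pochhammer 1 (r+k)" by (simp add: pochhammer_fact)
  also have "\<dots> = pochhammer 1 r * pochhammer (1 + real r) k" by (simp add: pochhammer_product')
  finally show ?thesis by (simp add: pochhammer_fact add.commute)
qed

lemma poch_minus_nat: assumes "j \<le> M"
  shows "pochhammer (- real M) j = (-1)^j * (fact M / fact (M - j))"
proof -
  have "pochhammer (- real M) j = (-1)^j * pochhammer (real M - real j + 1) j"
    by (simp add: pochhammer_minus)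
  also have "real M - real j + 1 = real (M - j) + 1" using assms by simp
  also have "pochhammer (real (M - j) + 1) j = fact M / fact (M-j)"
    using fact_add_poch[of "M-j" j] assms by (simp add: field_simps)
  finally show ?thesis .
qed

lemma laguerre_nat: "laguerre \<rho> (int M) z = poly (lagp \<rho> M) z"
proof -
  have "laguerre \<rho> (int M) z = pochhammer (real \<rho> + 1) M / fact M *
     (\<Sum>j=0..M. pochhammer (- real M) j / pochhammer (real \<rho> + 1) j * z ^ j / fact j)"
    by (simp add: laguerre_def)
  also have "\<dots> = (\<Sum>j\<le>M. pochhammer (real \<rho> + 1) M / fact M *
     (pochhammer (- real M) j / pochhammer (real \<rho> + 1) j * z ^ j / fact j))"
    by (simp add: sum_distrib_left atLeast0AtMost)
  also have "\<dots> = (\<Sum>j\<le>M. lagc \<rho> M j * z^j)"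
  proof (rule sum.cong[OF refl])
    fix j assume "j \<in> {..M}"
    then have j: "j \<le> M" by simp
    have p1: "pochhammer (real \<rho> + 1) M = fact (\<rho> + M) / fact \<rho>"
      using fact_add_poch[of \<rho> M] by (simp add: field_simps)
    have p2: "pochhammer (real \<rho> + 1) j = fact (\<rho> + j) / fact \<rho>"
      using fact_add_poch[of \<rho> j] by (simp add: field_simps)
    have c: "real ((M+\<rho>) choose (M-j)) = fact (M+\<rho>) / (fact (M-j) * fact (\<rho> + j))"
      using j by (subst binomial_fact) (auto simp: algebra_simps)
    show "pochhammer (real \<rho> + 1) M / fact M *
     (pochhammer (- real M) j / pochhammer (real \<rho> + 1) j * z ^ j / fact j) = lagc \<rho> M j * z^j"
      unfolding lagc_def p1 p2 c poch_minus_nat[OF j]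
      by (simp add: field_simps add.commute)
  qed
  finally show ?thesis by (simp add: poly_lagp)
qed

lemma laguerre_neg: "M < 0 \<Longrightarrow> laguerre \<rho> M z = 0"
  by (simp add: laguerre_def)



lemma alt_pascal_sum:
  fixes f :: "nat \<Rightarrow> real"
  shows "(\<Sum>l\<le>Suc k. (-1)^l * real (Suc k choose l) * f l) =
         (\<Sum>l\<le>k. (-1)^l * real (k choose l) * (f l - f (Suc l)))"
proof -
  define S1 where "S1 = (\<Sum>l\<le>k. (-1)^l * real (k choose l) * f l)"
  define S2 where "S2 = (\<Sum>l\<le>k. (-1)^l * real (k choose l) * f (Suc l))"
  define T where "T = (\<Sum>l\<le>k. (-1)^l * real (k choose Suc l) * f (Suc l))"
  have L: "(\<Sum>l\<le>Suc k. (-1)^l * real (Suc k choose l) * f l) =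
      f 0 + (\<Sum>l\<le>k. (-1)^(Suc l) * real (Suc k choose Suc l) * f (Suc l))"
    by (subst sum.atMost_Suc_shift) simp
  have L2: "(\<Sum>l\<le>k. (-1)^(Suc l) * real (Suc k choose Suc l) * f (Suc l)) = - S2 - T"
    unfolding S2_def T_def by (simp add: binomial_Suc_Suc sum.distrib algebra_simps sum_negf sum_subtractf)
  have S1a: "(\<Sum>l\<le>Suc k. (-1)^l * real (k choose l) * f l) = S1"
    unfolding S1_def by simp
  have S1b: "(\<Sum>l\<le>Suc k. (-1)^l * real (k choose l) * f l) = f 0 - T"
    unfolding T_def sum.atMost_Suc_shift by (simp add: sum_negf)
  have R: "(\<Sum>l\<le>k. (-1)^l * real (k choose l) * (f l - f (Suc l))) = S1 - S2"
    unfolding S1_def S2_def by (simp add: algebra_simps sum_subtractf)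
  show ?thesis using L L2 S1a S1b R by linarith
qed

definition Fs :: "nat \<Rightarrow> nat \<Rightarrow> real \<Rightarrow> real" where
  "Fs k j c = (\<Sum>l\<le>k. (-1)^l * real (k choose l) * pochhammer (c + real l) j)"

lemma poch_diff: "pochhammer (x + 1) (Suc j) - pochhammer x (Suc j) = real (Suc j) * pochhammer (x + 1) j"
proof -
  have "pochhammer x (Suc j) = x * pochhammer (x+1) j" by (simp add: pochhammer_rec)
  moreover have "pochhammer (x + 1) (Suc j) = pochhammer (x+1) j * (x + 1 + real j)"
    by (simp add: pochhammer_Suc)
  ultimately show ?thesis by (simp add: algebra_simps)
qed

lemma Fs_formula: "Fs k j c = (if k \<le> j then (-1)^k * (fact j / fact (j-k)) * pochhammer (c + real k) (j-k) else 0)"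
proof (induction k arbitrary: j c)
  case 0
  then show ?case by (simp add: Fs_def)
next
  case (Suc k)
  have FS: "Fs (Suc k) j c = (\<Sum>l\<le>k. (-1)^l * real (k choose l) * (pochhammer (c + real l) j - pochhammer (c + real (Suc l)) j))"
    unfolding Fs_def by (rule alt_pascal_sum)
  show ?case
  proof (cases j)
    case 0
    then show ?thesis using FS by simp
  next
    case (Suc j')
    have "Fs (Suc k) j c = (\<Sum>l\<le>k. (-1)^l * real (k choose l) * (- (real (Suc j') * pochhammer ((c+1) + real l) j')))"
      unfolding FS
      apply (rule sum.cong[OF refl])
      using poch_diff[of "c + real _" j'] Suc by (simp add: algebra_simps)
    also have "\<dots> = - real (Suc j') * Fs k j' (c+1)"
      by (simp add: Fs_def sum_distrib_left algebra_simps)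
    finally have E: "Fs (Suc k) j c = - real (Suc j') * Fs k j' (c+1)" .
    show ?thesis
    proof (cases "k \<le> j'")
      case True
      have e1: "c + 1 + real k = c + real (Suc k)" by simp
      show ?thesis unfolding E Suc.IH[of j' "c+1"] using True Suc
        by (simp add: e1 fact_Suc algebra_simps)
    next
      case False
      then show ?thesis unfolding E Suc.IH[of j' "c+1"] using Suc by simp
    qed
  qed
qed



definition Lf :: "real poly \<Rightarrow> real" where "Lf f = (\<Sum>k\<le>degree f. coeff f k * fact k)"

lemma Lf_bound: "degree f \<le> D \<Longrightarrow> Lf f = (\<Sum>k\<le>D. coeff f k * fact k)"
  unfolding Lf_def by (rule sum.mono_neutral_left) (auto simp: coeff_eq_0)

lemma Lf_add: "Lf (f + g) = Lf f + Lf g"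
proof -
  let ?D = "max (degree f) (degree g)"
  have "degree (f+g) \<le> ?D" by (rule degree_add_le) auto
  then show ?thesis using Lf_bound[of f ?D] Lf_bound[of g ?D] Lf_bound[of "f+g" ?D]
    by (simp add: sum.distrib algebra_simps)
qed

lemma Lf_smult: "Lf (Polynomial.smult c f) = c * Lf f"
  using Lf_bound[of "Polynomial.smult c f" "degree f"] Lf_bound[of f "degree f"]
  by (simp add: sum_distrib_left algebra_simps)

lemma Lf_0[simp]: "Lf 0 = 0" by (simp add: Lf_def)

lemma Lf_sum: "finite A \<Longrightarrow> Lf (\<Sum>i\<in>A. f i) = (\<Sum>i\<in>A. Lf (f i))"
  by (induction A rule: finite_induct) (auto simp: Lf_add)

lemma Lf_monom: "Lf (monom c k) = c * fact k"
proof -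
  have "Lf (monom c k) = (\<Sum>i\<le>k. (if k = i then c * fact i else 0))"
    using Lf_bound[of "monom c k" k] by (simp add: degree_monom_le coeff_monom if_distrib[where f="\<lambda>x. x * _"] cong: if_cong)
  then show ?thesis by simp
qed

lemma smult_sum_right: "Polynomial.smult c (\<Sum>i\<in>A. f i) = (\<Sum>i\<in>A. Polynomial.smult c (f i))"
  by (induction A rule: infinite_finite_induct) (auto simp: smult_add_right)

definition pL :: "nat \<Rightarrow> real poly" where "pL k = Polynomial.smult ((-1)^k * fact k) (lagp 0 k)"

lemma coeff_pL: "coeff (pL k) l = (if l \<le> k then (-1)^k * fact k * lagc 0 k l else 0)"
  by (simp add: pL_def coeff_lagp)

lemma coeff_pL_top: "coeff (pL k) k = 1"
  by (simp add: coeff_pL lagc_def flip: power_add mult_2)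

lemma coeff_pL_above: "k < l \<Longrightarrow> coeff (pL k) l = 0"
  by (simp add: coeff_pL)

lemma degree_pL: "degree (pL k) \<le> k"
  by (rule degree_le) (simp add: coeff_pL_above)

lemma monom_pL: "monom 1 j * pL k = (\<Sum>l\<le>k. monom ((-1)^k * fact k * lagc 0 k l) (j + l))"
  by (simp add: pL_def lagp_def sum_distrib_left mult_monom smult_sum_right smult_monom)

lemma Lf_monom_pL: "Lf (monom 1 j * pL k) = (-1)^k * fact k * Fs k j 1"
proof -
  have "Lf (monom 1 j * pL k) = (\<Sum>l\<le>k. (-1)^k * fact k * lagc 0 k l * fact (j + l))"
    unfolding monom_pL by (simp add: Lf_sum Lf_monom)
  also have "\<dots> = (\<Sum>l\<le>k. (-1)^k * fact k * ((-1)^l * real (k choose l) * pochhammer (1 + real l) j))"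
  proof (rule sum.cong[OF refl])
    fix l assume "l \<in> {..k}"
    then have l: "l \<le> k" by simp
    have "(fact (j+l)::real) = fact l * pochhammer (real l + 1) j"
      using fact_add_poch[of l j] by (simp add: add.commute)
    moreover have "k choose (k - l) = k choose l" using l by (simp add: binomial_symmetric[symmetric])
    ultimately show "(-1)^k * fact k * lagc 0 k l * fact (j + l) =
       (-1)^k * fact k * ((-1)^l * real (k choose l) * pochhammer (1 + real l) j)"
      by (simp add: lagc_def add.commute)
  qed
  also have "\<dots> = (-1)^k * fact k * Fs k j 1"
    by (simp add: Fs_def sum_distrib_left)
  finally show ?thesis .
qed

lemma pL_orth: "j < k \<Longrightarrow> Lf (monom 1 j * pL k) = 0"
  by (simp add: Lf_monom_pL Fs_formula)

lemma pL_norm: "Lf (monom 1 k * pL k) = (fact k)^2"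
  by (simp add: Lf_monom_pL Fs_formula power2_eq_square flip: mult.assoc power_add mult_2)

lemma pcompose_pow: "(p ^ l) \<circ>\<^sub>p q = (p \<circ>\<^sub>p q) ^ l"
  by (induction l) (auto simp: pcompose_mult pcompose_1)

lemma pcompose_monom: "monom c l \<circ>\<^sub>p q = Polynomial.smult c (q ^ l)"
  by (simp add: monom_altdef pcompose_smult pcompose_pow pcompose_pCons)

lemma coeff_lin_pow: "coeff ([:b,1:]^l) s = (if s \<le> l then real (l choose s) * b^(l-s) else (0::real))"
proof (cases "s \<le> l")
  case True then show ?thesis using coeff_linear_poly_power[of s l b "1::real"] by simp
next
  case False
  have "degree ([:b,1:]^l) \<le> l"
    by (simp add: degree_linear_power)
  then show ?thesis using False by (simp add: coeff_eq_0)
qed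

lemma taylor_lagp0: "N < s \<Longrightarrow> coeff (lagp 0 N \<circ>\<^sub>p [:b,1:]) s = 0"
proof -
  assume "N < s"
  have "degree (lagp 0 N) \<le> N" unfolding lagp_def
    by (intro degree_sum_le) (auto intro: order.trans[OF degree_monom_le])
  then have "degree (lagp 0 N \<circ>\<^sub>p [:b,1:]) \<le> N" using degree_pcompose_le[of "lagp 0 N" "[:b,1:]"]
    by simp
  then show ?thesis using \<open>N < s\<close> by (simp add: coeff_eq_0)
qed

lemma taylor_lagp: assumes s: "s \<le> N"
  shows "coeff (lagp 0 N \<circ>\<^sub>p [:b,1:]) s = (-1)^s / fact s * poly (lagp s (N-s)) b"
proof -
  have "coeff (lagp 0 N \<circ>\<^sub>p [:b,1:]) s = (\<Sum>l\<le>N. lagc 0 N l * (if s \<le> l then real (l choose s) * b^(l-s) else 0))"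
    by (simp add: lagp_def pcompose_sum pcompose_monom coeff_sum coeff_lin_pow)
  also have "\<dots> = (\<Sum>l\<in>{s..N}. lagc 0 N l * (real (l choose s) * b^(l-s)))"
    by (rule sum.mono_neutral_cong_right) auto
  also have "\<dots> = (\<Sum>t\<in>{0..N-s}. lagc 0 N (t+s) * (real ((t+s) choose s) * b^t))"
    using sum.shift_bounds_cl_nat_ivl[of "\<lambda>l. lagc 0 N l * (real (l choose s) * b^(l-s))" 0 s "N-s"] s
    by simp
  also have "\<dots> = (\<Sum>t\<le>N-s. (-1)^s / fact s * (lagc s (N-s) t * b^t))"
  proof (rule sum.cong)
    fix t assume "t \<in> {..N-s}"
    then have t: "t \<le> N - s" by simp
    have c1: "real ((t+s) choose s) = fact (t+s) / (fact s * fact t)"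
      by (subst binomial_fact) auto
    have e1: "N - s + s = N" "N - s - t = N - (t+s)" using s t by auto
    show "lagc 0 N (t+s) * (real ((t+s) choose s) * b^t) = (-1)^s / fact s * (lagc s (N-s) t * b^t)"
      unfolding lagc_def c1 e1 by (simp add: power_add field_simps)
  qed (auto simp: atLeast0AtMost)
  also have "\<dots> = (-1)^s / fact s * poly (lagp s (N-s)) b"
    by (simp add: poly_lagp sum_distrib_left)
  finally show ?thesis .
qed



definition piP :: "real \<Rightarrow> real \<Rightarrow> nat \<Rightarrow> real poly" where
  "piP a b \<alpha> = [:a,-1:] * [:b,-1:]^\<alpha>"

definition rowf :: "real \<Rightarrow> real \<Rightarrow> nat \<Rightarrow> nat \<Rightarrow> real poly \<Rightarrow> real" where
  "rowf a b \<alpha> r f = (if r < Suc \<alpha> then (if r = 0 then poly f a else coeff (f \<circ>\<^sub>p [:b,1:]) (r - 1))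
      else Lf (monom 1 (r - Suc \<alpha>) * f))"

definition colG :: "real \<Rightarrow> real \<Rightarrow> nat \<Rightarrow> nat \<Rightarrow> real poly" where
  "colG a b \<alpha> c = (if c < Suc \<alpha> then [:-b,1:]^c else monom 1 (c - Suc \<alpha>) * piP a b \<alpha>)"

lemma rowf_add: "rowf a b \<alpha> r (f + g) = rowf a b \<alpha> r f + rowf a b \<alpha> r g"
  by (simp add: rowf_def pcompose_add distrib_left Lf_add)

lemma rowf_smult: "rowf a b \<alpha> r (Polynomial.smult c f) = c * rowf a b \<alpha> r f"
  by (simp add: rowf_def pcompose_smult Lf_smult)

lemma rowf_0: "rowf a b \<alpha> r 0 = 0"
  by (simp add: rowf_def)

lemma rowf_sum: "finite A \<Longrightarrow> rowf a b \<alpha> r (\<Sum>i\<in>A. f i) = (\<Sum>i\<in>A. rowf a b \<alpha> r (f i))"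
  by (induction A rule: finite_induct) (auto simp: rowf_add rowf_0)

lemma poly_monom_sum: "degree (f::real poly) < N \<Longrightarrow> f = (\<Sum>k<N. Polynomial.smult (coeff f k) (monom 1 k))"
proof (rule poly_eqI)
  fix i assume "degree f < N"
  show "coeff f i = coeff (\<Sum>k<N. Polynomial.smult (coeff f k) (monom 1 k)) i"
  proof (cases "i < N")
    case True
    have "coeff (\<Sum>k<N. Polynomial.smult (coeff f k) (monom 1 k)) i = (\<Sum>k<N. if k = i then coeff f k else 0)"
      unfolding coeff_sum by (rule sum.cong) (auto simp: coeff_monom)
    then show ?thesis using True by simp
  next
    case False
    have "coeff (\<Sum>k<N. Polynomial.smult (coeff f k) (monom 1 k)) i = (\<Sum>k<N. 0)"
      unfolding coeff_sum by (rule sum.cong) (use False in \<open>auto simp: coeff_monom\<close>)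
    then show ?thesis using False \<open>degree f < N\<close> by (simp add: coeff_eq_0)
  qed
qed

lemma rowf_expand: "degree f < N \<Longrightarrow> rowf a b \<alpha> r f = (\<Sum>k<N. coeff f k * rowf a b \<alpha> r (monom 1 k))"
  apply (subst poly_monom_sum[of f N], assumption)
  by (simp add: rowf_sum rowf_smult)

lemma degree_piP: "degree (piP a b \<alpha>) = Suc \<alpha>"
  unfolding piP_def by (subst degree_mult_eq) (auto simp: degree_power_eq)

lemma coeff_piP_top: "coeff (piP a b \<alpha>) (Suc \<alpha>) = (-1)^(Suc \<alpha>)"
proof -
  have "coeff (piP a b \<alpha>) (Suc \<alpha>) = lead_coeff (piP a b \<alpha>)" by (simp add: degree_piP)
  also have "\<dots> = (-1)^(Suc \<alpha>)" unfolding piP_def lead_coeff_mult lead_coeff_power by simp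
  finally show ?thesis .
qed

lemma piP_nz: "piP a b \<alpha> \<noteq> 0"
  using degree_piP[of a b \<alpha>] by auto

lemma degree_colG: "degree (colG a b \<alpha> c) = c"
  using piP_nz[of a b \<alpha>] by (auto simp: colG_def degree_linear_power degree_mult_eq degree_monom_eq degree_piP)

lemma coeff_colG_diag: "coeff (colG a b \<alpha> c) c = (if c < Suc \<alpha> then 1 else (-1)^(Suc \<alpha>))"
  by (auto simp: colG_def coeff_monom_mult coeff_linear_power coeff_piP_top)



definition FM where "FM a b \<alpha> n = mat (n + Suc \<alpha>) (n + Suc \<alpha>) (\<lambda>(r,k). rowf a b \<alpha> r (monom 1 k))"
definition GM where "GM a b \<alpha> n = mat (n + Suc \<alpha>) (n + Suc \<alpha>) (\<lambda>(k,c). coeff (colG a b \<alpha> c) k)"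
definition UM where "UM \<alpha> n = mat (n + Suc \<alpha>) (n + Suc \<alpha>) (\<lambda>(k,c). coeff (pL c) k)"
definition NM where "NM a b \<alpha> n = mat (n + Suc \<alpha>) (n + Suc \<alpha>) (\<lambda>(r,c). rowf a b \<alpha> r (colG a b \<alpha> c))"
definition WM where "WM a b \<alpha> n = mat (n + Suc \<alpha>) (n + Suc \<alpha>) (\<lambda>(r,c). rowf a b \<alpha> r (pL c))"

lemma rowf_expand': "degree f < N \<Longrightarrow> (\<Sum>k = 0..<N. rowf a b \<alpha> r (monom 1 k) * coeff f k) = rowf a b \<alpha> r f"
  using rowf_expand[of f N a b \<alpha> r] by (simp add: atLeast0LessThan mult.commute)

lemma FG: "FM a b \<alpha> n * GM a b \<alpha> n = NM a b \<alpha> n"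
proof (rule eq_matI)
  fix i j assume i: "i < dim_row (NM a b \<alpha> n)" and j: "j < dim_col (NM a b \<alpha> n)"
  then have j': "j < n + Suc \<alpha>" by (simp add: NM_def)
  show "(FM a b \<alpha> n * GM a b \<alpha> n) $$ (i, j) = NM a b \<alpha> n $$ (i, j)"
    using i j rowf_expand'[of "colG a b \<alpha> j" "n + Suc \<alpha>" a b \<alpha> i]
    by (simp add: FM_def GM_def NM_def scalar_prod_def degree_colG)
qed (auto simp: FM_def GM_def NM_def)

lemma FU: "FM a b \<alpha> n * UM \<alpha> n = WM a b \<alpha> n"
proof (rule eq_matI)
  fix i j assume i: "i < dim_row (WM a b \<alpha> n)" and j: "j < dim_col (WM a b \<alpha> n)"
  then have j': "j < n + Suc \<alpha>" by (simp add: WM_def)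
  have d: "degree (pL j) < n + Suc \<alpha>" using degree_pL[of j] j' by linarith
  show "(FM a b \<alpha> n * UM \<alpha> n) $$ (i, j) = WM a b \<alpha> n $$ (i, j)"
    using i j d rowf_expand'[of "pL j" "n + Suc \<alpha>" a b \<alpha> i]
    by (simp add: FM_def UM_def WM_def scalar_prod_def)
qed (auto simp: FM_def UM_def WM_def)

lemma det_GM: "det (GM a b \<alpha> n) = (-1)^(Suc \<alpha> * n)"
proof -
  have ut: "upper_triangular (GM a b \<alpha> n)"
    unfolding upper_triangular_def GM_def
    by (auto intro!: coeff_eq_0 simp: degree_colG)
  have "det (GM a b \<alpha> n) = (\<Prod>c = 0..<n + Suc \<alpha>. coeff (colG a b \<alpha> c) c)"
    by (subst det_upper_triangular[OF ut]) (auto simp: GM_def prod_list_diag_prod)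
  also have "\<dots> = (\<Prod>c = 0..<n + Suc \<alpha>. (if c < Suc \<alpha> then 1 else (-1)^(Suc \<alpha>)))"
    by (simp add: coeff_colG_diag)
  also have "\<dots> = (\<Prod>c \<in> {Suc \<alpha>..<n + Suc \<alpha>}. (-1)^(Suc \<alpha>))"
    by (rule prod.mono_neutral_cong_right) auto
  also have "\<dots> = ((-1)^(Suc \<alpha>))^n" by simp
  also have "\<dots> = (-1)^(Suc \<alpha> * n)" by (simp only: power_mult)
  finally show ?thesis .
qed

lemma det_UM: "det (UM \<alpha> n) = 1"
proof -
  have ut: "upper_triangular (UM \<alpha> n)"
    unfolding upper_triangular_def UM_def by (auto simp: coeff_pL_above)
  show ?thesis
    by (subst det_upper_triangular[OF ut]) (auto simp: UM_def prod_list_diag_prod coeff_pL_top)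
qed



definition VM where "VM a b \<alpha> = mat (Suc \<alpha>) (Suc \<alpha>) (\<lambda>(r,c). rowf a b \<alpha> r (colG a b \<alpha> c))"
definition AM where "AM a b \<alpha> n = mat n (Suc \<alpha>) (\<lambda>(j,c). rowf a b \<alpha> (Suc \<alpha> + j) (colG a b \<alpha> c))"
definition HM where "HM a b \<alpha> n = mat n n (\<lambda>(j,i). Lf (monom 1 j * (monom 1 i * piP a b \<alpha>)))"
definition RM where "RM a b \<alpha> n = mat (Suc \<alpha>) (Suc \<alpha>) (\<lambda>(r,l). rowf a b \<alpha> r (pL (n + l)))"
definition XM where "XM a b \<alpha> n = mat (Suc \<alpha>) n (\<lambda>(r,c). rowf a b \<alpha> r (pL c))"
definition LtM where "LtM n = mat n n (\<lambda>(j,c). Lf (monom 1 j * pL c))"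

lemma rowf_piP_zero: assumes "r < Suc \<alpha>"
  shows "rowf a b \<alpha> r (monom 1 i * piP a b \<alpha>) = 0"
proof (cases r)
  case 0
  then show ?thesis by (simp add: rowf_def piP_def)
next
  case (Suc s)
  then have s: "s < \<alpha>" using assms by simp
  have e: "[:b,-1:] \<circ>\<^sub>p [:b,1:] = monom (-1) 1"
    by (simp add: pcompose_pCons monom_Suc monom_0)
  have "(monom 1 i * piP a b \<alpha>) \<circ>\<^sub>p [:b,1:] =
     monom ((-1)^\<alpha>) \<alpha> * ((monom 1 i \<circ>\<^sub>p [:b,1:]) * ([:a,-1:] \<circ>\<^sub>p [:b,1:]))"
    unfolding piP_def pcompose_mult pcompose_pow e monom_power mult_1
    by (simp only: ac_simps)
  then show ?thesis using Suc s assms by (simp add: rowf_def coeff_monom_mult)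
qed

lemma NM_block: "NM a b \<alpha> n = four_block_mat (VM a b \<alpha>) (0\<^sub>m (Suc \<alpha>) n) (AM a b \<alpha> n) (HM a b \<alpha> n)"
proof (rule eq_matI)
  fix i j assume i: "i < dim_row (four_block_mat (VM a b \<alpha>) (0\<^sub>m (Suc \<alpha>) n) (AM a b \<alpha> n) (HM a b \<alpha> n))"
    and j: "j < dim_col (four_block_mat (VM a b \<alpha>) (0\<^sub>m (Suc \<alpha>) n) (AM a b \<alpha> n) (HM a b \<alpha> n))"
  then have i': "i < Suc \<alpha> + n" and j': "j < Suc \<alpha> + n" by (auto simp: VM_def HM_def)
  show "NM a b \<alpha> n $$ (i, j) = four_block_mat (VM a b \<alpha>) (0\<^sub>m (Suc \<alpha>) n) (AM a b \<alpha> n) (HM a b \<alpha> n) $$ (i, j)"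
    using i' j' by (auto simp: NM_def VM_def AM_def HM_def rowf_piP_zero colG_def)
      (auto simp: rowf_def)
qed (auto simp: NM_def VM_def HM_def)

lemma det_NM: "det (NM a b \<alpha> n) = det (VM a b \<alpha>) * det (HM a b \<alpha> n)"
  unfolding NM_block
  by (rule det_four_block_mat_upper_right_zero) (auto simp: VM_def AM_def HM_def)



lemma WM_carrier: "WM a b \<alpha> n \<in> carrier_mat (Suc \<alpha> + n) (Suc \<alpha> + n)"
  by (simp add: WM_def add.commute)

lemma WM_swap: "mat (Suc \<alpha> + n) (Suc \<alpha> + n) (\<lambda>(i,j). WM a b \<alpha> n $$ (i, if j < Suc \<alpha> then j + n else j - Suc \<alpha>))
   = four_block_mat (RM a b \<alpha> n) (XM a b \<alpha> n) (0\<^sub>m n (Suc \<alpha>)) (LtM n)"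
proof (rule eq_matI)
  fix i j assume i: "i < dim_row (four_block_mat (RM a b \<alpha> n) (XM a b \<alpha> n) (0\<^sub>m n (Suc \<alpha>)) (LtM n))"
    and j: "j < dim_col (four_block_mat (RM a b \<alpha> n) (XM a b \<alpha> n) (0\<^sub>m n (Suc \<alpha>)) (LtM n))"
  then have i': "i < Suc \<alpha> + n" and j': "j < Suc \<alpha> + n" by (auto simp: RM_def LtM_def)
  show "mat (Suc \<alpha> + n) (Suc \<alpha> + n) (\<lambda>(i,j). WM a b \<alpha> n $$ (i, if j < Suc \<alpha> then j + n else j - Suc \<alpha>)) $$ (i,j)
     = four_block_mat (RM a b \<alpha> n) (XM a b \<alpha> n) (0\<^sub>m n (Suc \<alpha>)) (LtM n) $$ (i,j)"
    using i' j' by (auto simp: WM_def RM_def XM_def LtM_def rowf_def add.commute intro!: pL_orth)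
qed (auto simp: RM_def LtM_def)

lemma det_LtM: "det (LtM n) = (\<Prod>j = 0..<n. (fact j)^2)"
proof -
  have "det (LtM n) = prod_list (diag_mat (LtM n))"
    by (rule det_lower_triangular[of n]) (auto simp: LtM_def pL_orth)
  also have "\<dots> = (\<Prod>j = 0..<n. (fact j)^2)"
    by (simp add: prod_list_diag_prod LtM_def pL_norm)
  finally show ?thesis .
qed

lemma det_WM: "det (WM a b \<alpha> n) = (-1)^(Suc \<alpha> * n) * (det (RM a b \<alpha> n) * (\<Prod>j = 0..<n. (fact j)^2))"
proof -
  have "det (WM a b \<alpha> n) = (-1)^(Suc \<alpha> * n) *
      det (mat (Suc \<alpha> + n) (Suc \<alpha> + n) (\<lambda>(i,j). WM a b \<alpha> n $$ (i, if j < Suc \<alpha> then j + n else j - Suc \<alpha>)))"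
    by (rule det_swap_cols[OF WM_carrier])
  also have "det (mat (Suc \<alpha> + n) (Suc \<alpha> + n) (\<lambda>(i,j). WM a b \<alpha> n $$ (i, if j < Suc \<alpha> then j + n else j - Suc \<alpha>)))
     = det (RM a b \<alpha> n) * det (LtM n)"
    unfolding WM_swap
    by (rule det_four_block_mat_lower_left_zero) (auto simp: RM_def XM_def LtM_def)
  finally show ?thesis by (simp add: det_LtM)
qed

lemma det_VM: "det (VM a b \<alpha>) = (b - a)^\<alpha>"
proof -
  have C: "VM a b \<alpha> \<in> carrier_mat (\<alpha> + 1) (\<alpha> + 1)" by (simp add: VM_def)
  have e: "[:-b,1:] \<circ>\<^sub>p [:b,1:] = monom 1 1"
    by (simp add: pcompose_pCons monom_Suc monom_0)
  have row: "rowf a b \<alpha> (Suc s) (colG a b \<alpha> c) = (if s = c then 1 else 0)" if "s < \<alpha>" "c < Suc \<alpha>" for s c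
    using that by (simp add: rowf_def colG_def pcompose_pow e monom_power coeff_monom)
  have row0: "rowf a b \<alpha> 0 (colG a b \<alpha> c) = (a - b)^c" if "c < Suc \<alpha>" for c
    using that by (simp add: rowf_def colG_def poly_power)
  have "det (VM a b \<alpha>) = (-1)^(\<alpha> * 1) * det (mat (\<alpha> + 1) (\<alpha> + 1) (\<lambda>(i,j). VM a b \<alpha> $$ (if i < \<alpha> then i + 1 else i - \<alpha>, j)))"
    by (rule det_swap_rows[OF C])
  also have "det (mat (\<alpha> + 1) (\<alpha> + 1) (\<lambda>(i,j). VM a b \<alpha> $$ (if i < \<alpha> then i + 1 else i - \<alpha>, j)))
      = prod_list (diag_mat (mat (\<alpha> + 1) (\<alpha> + 1) (\<lambda>(i,j). VM a b \<alpha> $$ (if i < \<alpha> then i + 1 else i - \<alpha>, j))))"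
    by (rule det_lower_triangular[of "\<alpha>+1"]) (auto simp: VM_def row)
  also have "\<dots> = (\<Prod>i = 0..<\<alpha>+1. VM a b \<alpha> $$ (if i < \<alpha> then i + 1 else i - \<alpha>, i))"
    by (simp add: prod_list_diag_prod)
  also have "\<dots> = (a - b)^\<alpha>"
    by (simp add: VM_def row row0)
  finally show ?thesis by (simp add: power_mult_distrib[symmetric])
qed



lemma alg_main: "(b - a)^\<alpha> * det (HM a b \<alpha> n) = det (RM a b \<alpha> n) * (\<Prod>j = 0..<n. (fact j)^2)"
proof -
  have cF: "FM a b \<alpha> n \<in> carrier_mat (n + Suc \<alpha>) (n + Suc \<alpha>)" by (simp add: FM_def)
  have cG: "GM a b \<alpha> n \<in> carrier_mat (n + Suc \<alpha>) (n + Suc \<alpha>)" by (simp add: GM_def)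
  have cU: "UM \<alpha> n \<in> carrier_mat (n + Suc \<alpha>) (n + Suc \<alpha>)" by (simp add: UM_def)
  have "det (VM a b \<alpha>) * det (HM a b \<alpha> n) = det (FM a b \<alpha> n) * (-1)^(Suc \<alpha> * n)"
    using det_mult[OF cF cG] by (simp add: FG det_NM det_GM)
  moreover have "det (FM a b \<alpha> n) = det (WM a b \<alpha> n)"
    using det_mult[OF cF cU] by (simp add: FU det_UM)
  ultimately have "det (VM a b \<alpha>) * det (HM a b \<alpha> n) =
     ((-1)^(Suc \<alpha> * n) * (-1)^(Suc \<alpha> * n)) * (det (RM a b \<alpha> n) * (\<Prod>j = 0..<n. (fact j)^2))"
    by (simp add: det_WM)
  also have "(-1::real)^(Suc \<alpha> * n) * (-1)^(Suc \<alpha> * n) = 1"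
    by (simp flip: power_add)
  finally show ?thesis by (simp add: det_VM)
qed



lemma det_scale:
  fixes A :: "real mat"
  assumes A: "A \<in> carrier_mat k k"
  shows "det (mat k k (\<lambda>(i,j). x i * y j * A $$ (i,j))) = (\<Prod>i = 0..<k. x i) * (\<Prod>j = 0..<k. y j) * det A"
proof -
  have "det (mat k k (\<lambda>(i,j). x i * y j * A $$ (i,j))) =
     (\<Sum>p \<in> {p. p permutes {0..<k}}. signof p * (\<Prod>i = 0..<k. x i * y (p i) * A $$ (i, p i)))"
    by (subst det_def'[of _ k]) auto
  also have "\<dots> = (\<Sum>p \<in> {p. p permutes {0..<k}}. (\<Prod>i = 0..<k. x i) * (\<Prod>j = 0..<k. y j) * (signof p * (\<Prod>i = 0..<k. A $$ (i, p i))))"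
  proof (rule sum.cong[OF refl])
    fix p assume "p \<in> {p. p permutes {0..<k}}"
    then have p: "p permutes {0..<k}" by simp
    have "(\<Prod>i = 0..<k. y (p i)) = (\<Prod>j = 0..<k. y j)"
      using prod.permute[OF p, of y] by (simp add: comp_def)
    then show "signof p * (\<Prod>i = 0..<k. x i * y (p i) * A $$ (i, p i)) =
      (\<Prod>i = 0..<k. x i) * (\<Prod>j = 0..<k. y j) * (signof p * (\<Prod>i = 0..<k. A $$ (i, p i)))"
      by (simp add: prod.distrib)
  qed
  also have "\<dots> = (\<Prod>i = 0..<k. x i) * (\<Prod>j = 0..<k. y j) * det A"
    by (simp add: det_def'[OF A] sum_distrib_left)
  finally show ?thesis .
qed

definition TM where "TM a b \<alpha> n = mat (\<alpha> + 1) (\<alpha> + 1) (\<lambda>(i, j).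
          if j = 0 then laguerre 0 (int (n + i)) a
          else laguerre (j - 1) (int n + int i + 1 - int j) b)"

definition d1 where "d1 n l = (-1)^(n+l) * fact (n+l)"
definition d2 where "d2 r = (if r = 0 then 1 else (-1)^(r-1) / fact (r-1))"

lemma laguerre_nat': "laguerre \<rho> (int M + int L) z = poly (lagp \<rho> (M+L)) z"
  using laguerre_nat[of \<rho> "M+L" z] by simp

lemma RM_entry: assumes "r < Suc \<alpha>" "l < Suc \<alpha>"
  shows "rowf a b \<alpha> r (pL (n + l)) = d2 r * d1 n l * TM a b \<alpha> n $$ (l, r)"
proof (cases r)
  case 0
  then show ?thesis using assms by (simp add: rowf_def pL_def TM_def d1_def d2_def laguerre_nat')
next
  case (Suc s)
  have s: "s < \<alpha>" using assms Suc by simp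
  have T: "TM a b \<alpha> n $$ (l, r) = laguerre s (int (n + l) - int s) b"
    using assms Suc by (simp add: TM_def algebra_simps)
  show ?thesis
  proof (cases "s \<le> n + l")
    case True
    have E: "int n + int l - int s = int (n + l - s)" using True by simp
    have L: "laguerre s (int n + int l - int s) b = poly (lagp s (n+l-s)) b"
      by (subst E) (rule laguerre_nat)
    show ?thesis using Suc s True L unfolding T
      by (simp add: rowf_def pL_def pcompose_smult taylor_lagp laguerre_nat d1_def d2_def)
  next
    case False
    then show ?thesis using Suc s unfolding T
      by (simp add: rowf_def pL_def pcompose_smult taylor_lagp0 laguerre_neg d1_def d2_def)
  qed
qed

lemma det_RM: "det (RM a b \<alpha> n) = (\<Prod>r = 0..<\<alpha>+1. d2 r) * (\<Prod>l = 0..<\<alpha>+1. d1 n l) * det (TM a b \<alpha> n)"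
proof -
  have cT: "(TM a b \<alpha> n)\<^sup>T \<in> carrier_mat (\<alpha>+1) (\<alpha>+1)" by (simp add: TM_def)
  have "RM a b \<alpha> n = mat (\<alpha>+1) (\<alpha>+1) (\<lambda>(i,j). d2 i * d1 n j * (TM a b \<alpha> n)\<^sup>T $$ (i,j))"
    by (rule eq_matI) (auto simp: RM_def RM_entry TM_def)
  then have "det (RM a b \<alpha> n) = (\<Prod>r = 0..<\<alpha>+1. d2 r) * (\<Prod>l = 0..<\<alpha>+1. d1 n l) * det ((TM a b \<alpha> n)\<^sup>T)"
    using det_scale[OF cT, of d2 "d1 n"] by simp
  moreover have "det ((TM a b \<alpha> n)\<^sup>T) = det (TM a b \<alpha> n)"
    by (rule det_transpose[of _ "\<alpha>+1"]) (simp add: TM_def)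
  ultimately show ?thesis by simp
qed



lemma hbi_mom: "has_bochner_integral lborel (\<lambda>y::real. indicator {0..} y * (y^k * exp (-y))) (fact k)"
proof (rule has_bochner_integral_nn_integral)
  show "(\<lambda>y::real. indicator {0..} y * (y^k * exp (-y))) \<in> borel_measurable lborel" by measurable
  show "AE x in lborel. 0 \<le> indicator {0..} x * ((x::real) ^ k * exp (- x))"
    by (intro AE_I2) (auto split: split_indicator)
  show "0 \<le> (fact k :: real)" by simp
  have "(\<integral>\<^sup>+x. ennreal (indicator {0..} x * ((x::real) ^ k * exp (- x))) \<partial>lborel) =
        (\<integral>\<^sup>+x\<in>{0..}. ennreal (x ^ k * exp (- x))\<partial>lborel)"
    by (rule nn_integral_cong) (auto split: split_indicator)
  also have "\<dots> = ennreal (fact k)" using nn_intergal_power_times_exp_Ici[of k] by simp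
  finally show "(\<integral>\<^sup>+x. ennreal (indicator {0..} x * ((x::real) ^ k * exp (- x))) \<partial>lborel) = ennreal (fact k)" .
qed

lemma hbi_poly: "has_bochner_integral lborel (\<lambda>y::real. indicator {0..} y * (poly f y * exp (-y))) (Lf f)"
proof -
  have e: "(\<lambda>y::real. indicator {0..} y * (poly f y * exp (-y))) =
    (\<lambda>y. \<Sum>k\<le>degree f. coeff f k * (indicator {0..} y * (y^k * exp (-y))))"
    by (auto simp: poly_altdef sum_distrib_left sum_distrib_right algebra_simps)
  show ?thesis unfolding e Lf_def
    by (rule has_bochner_integral_sum, rule has_bochner_integral_mult_right, rule hbi_mom)
qed

lemma integrable_poly: "integrable lborel (\<lambda>y::real. indicator {0..} y * (poly f y * exp (-y)))"
  using hbi_poly[of f] has_bochner_integral_iff by blast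

lemma integral_poly: "(\<integral>y. indicator {0..} y * (poly f y * exp (-y)) \<partial>lborel) = Lf f"
  using hbi_poly has_bochner_integral_integral_eq by blast

lemma andreief_comb:
  fixes M :: "nat \<Rightarrow> real"
  shows "(\<Sum>p\<in>{p. p permutes {0..<n}}. \<Sum>q\<in>{p. p permutes {0..<n}}.
           signof p * signof q * (\<Prod>i = 0..<n. M (p i + q i)))
       = fact n * det (mat n n (\<lambda>(i,j). M (i + j)))"
proof -
  let ?P = "{p. p permutes {0..<n}}"
  define D where "D = (\<Sum>r\<in>?P. signof r * (\<Prod>j = 0..<n. M (j + r j)))"
  have inner: "(\<Sum>q\<in>?P. signof p * signof q * (\<Prod>i = 0..<n. M (p i + q i))) = D" if p: "p permutes {0..<n}" for p
  proof -
    have "(\<Sum>q\<in>?P. signof p * signof q * (\<Prod>i = 0..<n. M (p i + q i))) =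
          (\<Sum>r\<in>?P. signof p * signof (r \<circ> p) * (\<Prod>i = 0..<n. M (p i + (r \<circ> p) i)))"
      by (rule sum_permutations_compose_right[OF p])
    also have "\<dots> = (\<Sum>r\<in>?P. signof r * (\<Prod>j = 0..<n. M (j + r j)))"
    proof (rule sum.cong[OF refl])
      fix r assume "r \<in> ?P"
      then have r: "r permutes {0..<n}" by simp
      have s: "signof (r \<circ> p) = signof r * signof p"
      proof -
        have "permutation r" "permutation p" using r p by (auto simp: permutation_permutes)
        then show ?thesis by (simp add: sign_compose)
      qed
      have pr: "(\<Prod>i = 0..<n. M (p i + (r \<circ> p) i)) = (\<Prod>j = 0..<n. M (j + r j))"
        using prod.permute[OF p, of "\<lambda>j. M (j + r j)"] by (simp add: comp_def)
      have ss: "signof p * signof p = (1::real)"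
        by (simp add: sign_def)
      show "signof p * signof (r \<circ> p) * (\<Prod>i = 0..<n. M (p i + (r \<circ> p) i)) = signof r * (\<Prod>j = 0..<n. M (j + r j))"
        unfolding s pr using ss by (simp add: algebra_simps)
    qed
    finally show ?thesis unfolding D_def .
  qed
  have "(\<Sum>p\<in>?P. \<Sum>q\<in>?P. signof p * signof q * (\<Prod>i = 0..<n. M (p i + q i))) = (\<Sum>p\<in>?P. D)"
    by (rule sum.cong) (auto simp: inner)
  also have "\<dots> = fact n * D" using card_permutations[of "{0..<n}" n] by simp
  also have "D = det (mat n n (\<lambda>(i,j). M (i + j)))"
    unfolding D_def by (subst det_def'[of _ n]) (auto intro!: sum.cong prod.cong simp: permutes_def)
  finally show ?thesis .
qed



lemma prod_neg_diff: "(\<Prod>i = 0..<k. (f i - c::real)) = (-1)^k * (\<Prod>i = 0..<k. (c - f i))"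
  by (induction k) (auto simp: algebra_simps)

lemma vdm_Suc: "vdm (Suc n) y = vdm n y * (\<Prod>i = 0..<n. (y n - y i))"
  by (simp add: vdm_def atLeast0LessThan)

lemma vandermonde_det: "vdm n y = det (mat n n (\<lambda>(i,j). y i ^ j))"
proof (induction n)
  case 0
  then show ?case by (simp add: vdm_def)
next
  case (Suc n)
  define V where "V = mat (Suc n) (Suc n) (\<lambda>(i,j). y i ^ j)"
  define E where "E = mat (Suc n) (Suc n) (\<lambda>(k,j). if k = j then 1 else if Suc k = j then - y n else (0::real))"
  define B where "B = mat (Suc n) (Suc n) (\<lambda>(i,j). if j = 0 then 1 else y i ^ (j - 1) * (y i - y n))"
  have cV: "V \<in> carrier_mat (Suc n) (Suc n)" by (simp add: V_def)
  have cE: "E \<in> carrier_mat (Suc n) (Suc n)" by (simp add: E_def)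
  have cB: "B \<in> carrier_mat (Suc n) (Suc n)" by (simp add: B_def)
  have dE: "det E = 1"
  proof -
    have ut: "upper_triangular E" unfolding upper_triangular_def E_def by auto
    show ?thesis by (subst det_upper_triangular[OF ut cE]) (simp add: prod_list_diag_prod E_def)
  qed
  have VE: "V * E = B"
  proof (rule eq_matI)
    fix i j assume i: "i < dim_row B" and j: "j < dim_col B"
    then have i': "i < Suc n" and j': "j < Suc n" by (auto simp: B_def)
    have "(V * E) $$ (i,j) = (\<Sum>k = 0..<Suc n. y i ^ k * (if k = j then 1 else if Suc k = j then - y n else 0))"
      using i' j' by (simp add: V_def E_def scalar_prod_def)
    also have "\<dots> = (\<Sum>k = 0..<Suc n. (if k = j then y i ^ k else 0)) + (\<Sum>k = 0..<Suc n. (if Suc k = j then - y n * y i ^ k else 0))"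
      by (subst sum.distrib[symmetric]) (rule sum.cong, auto)
    also have "\<dots> = B $$ (i,j)"
    proof (cases j)
      case 0
      then show ?thesis using i' j' by (simp add: B_def)
    next
      case (Suc j0)
      have "(\<Sum>k = 0..<Suc n. (if Suc k = j then - y n * y i ^ k else 0)) = (\<Sum>k = 0..<Suc n. (if k = j0 then - y n * y i ^ k else 0))"
        using Suc by (intro sum.cong) auto
      moreover have "Suc j0 = n \<Longrightarrow> y i ^ n = y i * y i ^ j0" by auto
      ultimately show ?thesis using i' j' Suc by (cases "Suc j0 < n") (auto simp: B_def algebra_simps)
    qed
    finally show "(V * E) $$ (i,j) = B $$ (i,j)" .
  qed (auto simp: V_def E_def B_def)
  have dVB: "det V = det B" using det_mult[OF cV cE] VE dE by simp
  have "det B = (\<Sum>j<Suc n. B $$ (n,j) * cofactor B n j)"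
    by (rule laplace_expansion_row[OF cB]) simp
  also have "\<dots> = (\<Sum>j<Suc n. if j = 0 then cofactor B n 0 else 0)"
    by (rule sum.cong) (auto simp: B_def)
  also have "\<dots> = cofactor B n 0" by simp
  also have "\<dots> = (-1)^n * det (mat n n (\<lambda>(i,j). (y i - y n) * 1 * y i ^ j))"
  proof -
    have "mat_delete B n 0 = mat n n (\<lambda>(i,j). (y i - y n) * 1 * y i ^ j)"
      by (rule eq_matI) (auto simp: mat_delete_def B_def)
    then show ?thesis unfolding cofactor_def by simp
  qed
  also have "\<dots> = (-1)^n * ((\<Prod>i = 0..<n. (y i - y n)) * det (mat n n (\<lambda>(i,j). y i ^ j)))"
  proof -
    have "mat n n (\<lambda>(i,j). (y i - y n) * 1 * mat n n (\<lambda>(i,j). y i ^ j) $$ (i,j)) = mat n n (\<lambda>(i,j). (y i - y n) * 1 * y i ^ j)"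
      by (rule eq_matI) auto
    then show ?thesis
      using det_scale[of "mat n n (\<lambda>(i,j). y i ^ j)" n "\<lambda>i. y i - y n" "\<lambda>j. 1"] by simp
  qed
  also have "\<dots> = vdm (Suc n) y"
    by (simp add: vdm_Suc Suc.IH prod_neg_diff)
  finally show ?case using dVB by (simp add: V_def)
qed



interpretation PL: product_sigma_finite "\<lambda>_::nat. lborel :: real measure"
  by (rule product_sigma_finite.intro) (rule sigma_finite_lborel)

definition wfun :: "real \<Rightarrow> real \<Rightarrow> nat \<Rightarrow> nat \<Rightarrow> real \<Rightarrow> real" where
  "wfun a b \<alpha> k y = indicator {0..} y * (poly (piP a b \<alpha> * monom 1 k) y * exp (-y))"

lemma hbi_term:
  fixes n :: nat
  shows "has_bochner_integral (PiM {..<n} (\<lambda>_. lborel)) (\<lambda>x. \<Prod>i\<in>{..<n}. wfun a b \<alpha> (g i) (x i))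
      (\<Prod>i\<in>{..<n}. Lf (piP a b \<alpha> * monom 1 (g i)))"
proof -
  have int: "integrable lborel (wfun a b \<alpha> (g i))" for i
    unfolding wfun_def by (rule integrable_poly)
  have "integrable (PiM {..<n} (\<lambda>_. lborel)) (\<lambda>x. \<Prod>i\<in>{..<n}. wfun a b \<alpha> (g i) (x i))"
    by (rule PL.product_integrable_prod[where I="{..<n}" and f="\<lambda>i. wfun a b \<alpha> (g i)"]) (auto intro: int)
  moreover have "(\<integral>x. (\<Prod>i\<in>{..<n}. wfun a b \<alpha> (g i) (x i)) \<partial>PiM {..<n} (\<lambda>_. lborel)) =
      (\<Prod>i\<in>{..<n}. integral\<^sup>L lborel (wfun a b \<alpha> (g i)))"
    by (rule PL.product_integral_prod[where I="{..<n}" and f="\<lambda>i. wfun a b \<alpha> (g i)"]) (auto intro: int)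
  moreover have "integral\<^sup>L lborel (wfun a b \<alpha> (g i)) = Lf (piP a b \<alpha> * monom 1 (g i))" for i
    unfolding wfun_def by (rule integral_poly)
  ultimately show ?thesis by (simp add: has_bochner_integral_iff)
qed

lemma vdm_sq: "(vdm n y)^2 = (\<Sum>p\<in>{p. p permutes {0..<n}}. \<Sum>q\<in>{p. p permutes {0..<n}}.
           signof p * signof q * (\<Prod>i\<in>{..<n}. y i ^ (p i + q i)))"
proof -
  have d: "vdm n y = (\<Sum>p\<in>{p. p permutes {0..<n}}. signof p * (\<Prod>i = 0..<n. y i ^ p i))"
    unfolding vandermonde_det by (subst det_def'[of _ n]) (auto intro!: sum.cong prod.cong simp: permutes_def)
  show ?thesis
    unfolding power2_eq_square d sum_product
    by (intro sum.cong refl) (simp add: atLeast0LessThan power_add prod.distrib algebra_simps)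
qed

lemma integrand_eq:
  fixes n :: nat
  shows "indicator {y. \<forall>i<n. 0 \<le> y i} y * (\<Prod>i<n. (a - y i) * (b - y i) ^ \<alpha> * exp (- y i)) * (vdm n y)\<^sup>2
   = (\<Sum>p\<in>{p. p permutes {0..<n}}. \<Sum>q\<in>{p. p permutes {0..<n}}.
           signof p * signof q * (\<Prod>i\<in>{..<n}. wfun a b \<alpha> (p i + q i) (y i)))"
proof -
  have ind: "indicator {y. \<forall>i<n. 0 \<le> y i} y = (\<Prod>i<n. indicator {0..} (y i) :: real)"
  proof (cases "\<forall>i<n. 0 \<le> y i")
    case True then show ?thesis by (simp add: indicator_def)
  next
    case False
    then obtain i where "i < n" "\<not> 0 \<le> y i" by auto
    then have "(\<Prod>i<n. indicator {0..} (y i) :: real) = 0"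
      by (subst prod_zero_iff) (auto simp: indicator_def)
    then show ?thesis using False by (simp add: indicator_def)
  qed
  have w: "wfun a b \<alpha> k (y i) = indicator {0..} (y i) * ((a - y i) * (b - y i) ^ \<alpha> * exp (- y i)) * y i ^ k" for k i
    unfolding wfun_def piP_def by (simp add: poly_monom algebra_simps)
  define I where "I = (\<Prod>i<n. indicator {0..} (y i) :: real)"
  define P where "P = (\<Prod>i<n. (a - y i) * (b - y i) ^ \<alpha> * exp (- y i))"
  have t: "(\<Prod>i\<in>{..<n}. wfun a b \<alpha> (p i + q i) (y i)) = I * P * (\<Prod>i\<in>{..<n}. y i ^ (p i + q i))" for p q
    unfolding w I_def P_def by (simp add: prod.distrib)
  show ?thesis
    unfolding vdm_sq ind t I_def[symmetric] P_def[symmetric]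
    by (simp add: sum_distrib_left ac_simps)
qed

lemma Q_andreief: "Q n a b \<alpha> = fact n * det (mat n n (\<lambda>(i,j). Lf (piP a b \<alpha> * monom 1 (i + j))))"
proof -
  let ?P = "{p. p permutes {0..<n}}"
  have "has_bochner_integral (PiM {..<n} (\<lambda>_. lborel))
     (\<lambda>y. \<Sum>p\<in>?P. \<Sum>q\<in>?P. signof p * signof q * (\<Prod>i\<in>{..<n}. wfun a b \<alpha> (p i + q i) (y i)))
     (\<Sum>p\<in>?P. \<Sum>q\<in>?P. signof p * signof q * (\<Prod>i\<in>{..<n}. Lf (piP a b \<alpha> * monom 1 (p i + q i))))"
    by (intro has_bochner_integral_sum has_bochner_integral_mult_right hbi_term)
  then have "Q n a b \<alpha> = (\<Sum>p\<in>?P. \<Sum>q\<in>?P. signof p * signof q * (\<Prod>i\<in>{..<n}. Lf (piP a b \<alpha> * monom 1 (p i + q i))))"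
    unfolding Q_def integrand_eq by (rule has_bochner_integral_integral_eq)
  also have "\<dots> = fact n * det (mat n n (\<lambda>(i,j). Lf (piP a b \<alpha> * monom 1 (i + j))))"
    using andreief_comb[where n=n and M="\<lambda>k. Lf (piP a b \<alpha> * monom 1 k)"] by (simp add: atLeast0LessThan)
  finally show ?thesis .
qed

lemma Q_HM: "Q n a b \<alpha> = fact n * det (HM a b \<alpha> n)"
proof -
  have "mat n n (\<lambda>(i,j). Lf (piP a b \<alpha> * monom 1 (i + j))) = HM a b \<alpha> n"
  proof (rule eq_matI)
    fix i j
    have eq: "monom 1 i * (monom 1 j * piP a b \<alpha>) = piP a b \<alpha> * monom 1 (i + j)"
      by (simp add: mult.assoc[symmetric] mult_monom mult.commute)
    show "mat n n (\<lambda>(i,j). Lf (piP a b \<alpha> * monom 1 (i + j))) $$ (i, j) = HM a b \<alpha> n $$ (i, j)"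
      if "i < dim_row (HM a b \<alpha> n)" "j < dim_col (HM a b \<alpha> n)"
    proof -
      have "HM a b \<alpha> n $$ (i, j) = Lf (monom 1 i * (monom 1 j * piP a b \<alpha>))"
        using that by (simp add: HM_def)
      also have "\<dots> = Lf (piP a b \<alpha> * monom 1 (i + j))" by (simp only: eq)
      finally show ?thesis using that by (simp add: HM_def)
    qed
  qed (auto simp: HM_def)
  then show ?thesis by (simp add: Q_andreief)
qed



lemma K1: "(\<Prod>i = 0..<n. fact i * fact (i + 1) :: real) = fact n * (\<Prod>i = 0..<n. (fact i)^2)"
  by (induction n) (auto simp: power2_eq_square algebra_simps)

lemma K2: "(\<Prod>i = 1..\<alpha> + 1. fact (n + i - 1) :: real) = (\<Prod>l = 0..<\<alpha> + 1. fact (n + l))"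
proof -
  have "(\<Prod>i = Suc 0..Suc \<alpha>. fact (n + i - 1) :: real) = (\<Prod>i = 0..\<alpha>. fact (n + Suc i - 1))"
    by (rule prod.shift_bounds_cl_Suc_ivl)
  then show ?thesis by (simp add: atLeastLessThanSuc_atLeastAtMost)
qed

lemma K3: "(\<Prod>i = 1..<\<alpha>. fact i :: real) = (\<Prod>i = 0..<\<alpha>. fact i)"
proof (cases \<alpha>)
  case 0 then show ?thesis by simp
next
  case (Suc k)
  then show ?thesis by (simp add: prod.atLeast_Suc_lessThan)
qed

lemma K4: "(\<Prod>r = 0..<\<alpha>+1. d2 r) = (\<Prod>s = 0..<\<alpha>. (-1::real)^s) / (\<Prod>s = 0..<\<alpha>. fact s)"
proof -
  have "(\<Prod>r = 0..<\<alpha>+1. d2 r) = d2 0 * (\<Prod>s = 0..<\<alpha>. d2 (Suc s))"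
    unfolding atLeast0LessThan Suc_eq_plus1[symmetric] by (rule prod.lessThan_Suc_shift)
  also have "\<dots> = (\<Prod>s = 0..<\<alpha>. (-1::real)^s / fact s)" by (simp add: d2_def)
  also have "\<dots> = (\<Prod>s = 0..<\<alpha>. (-1::real)^s) / (\<Prod>s = 0..<\<alpha>. fact s)" by (rule prod_dividef)
  finally show ?thesis .
qed

lemma K5: "(\<Prod>l = 0..<\<alpha>+1. (-1::real)^(n+l)) * (\<Prod>s = 0..<\<alpha>. (-1)^s) = (-1)^(n + \<alpha> * (n + \<alpha>))"
proof (induction \<alpha>)
  case 0 then show ?case by simp
next
  case (Suc \<alpha>)
  have "(\<Prod>l = 0..<Suc \<alpha>+1. (-1::real)^(n+l)) * (\<Prod>s = 0..<Suc \<alpha>. (-1)^s) =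
     ((\<Prod>l = 0..<\<alpha>+1. (-1::real)^(n+l)) * (\<Prod>s = 0..<\<alpha>. (-1)^s)) * ((-1)^(n + Suc \<alpha>) * (-1)^\<alpha>)"
    by (simp add: algebra_simps)
  also have "\<dots> = (-1)^(n + \<alpha> * (n + \<alpha>) + (n + Suc \<alpha>) + \<alpha>)"
    unfolding Suc.IH by (simp add: power_add)
  also have "n + \<alpha> * (n + \<alpha>) + (n + Suc \<alpha>) + \<alpha> = n + Suc \<alpha> * (n + Suc \<alpha>)"
    by (simp add: algebra_simps)
  finally show ?case .
qed

lemma Kbar_eq: "Kbar n \<alpha> = fact n * (\<Prod>j = 0..<n. (fact j)^2) * ((\<Prod>r = 0..<\<alpha>+1. d2 r) * (\<Prod>l = 0..<\<alpha>+1. d1 n l))"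
proof -
  have d1: "(\<Prod>l = 0..<\<alpha>+1. d1 n l) = (\<Prod>l = 0..<\<alpha>+1. (-1::real)^(n+l)) * (\<Prod>l = 0..<\<alpha>+1. fact (n+l))"
    by (simp add: d1_def prod.distrib)
  have nz: "(\<Prod>s = 0..<\<alpha>. fact s :: real) \<noteq> 0" by simp
  have "Kbar n \<alpha> = (-1) ^ (n + \<alpha> * (n + \<alpha>)) * ((\<Prod>l = 0..<\<alpha> + 1. fact (n + l)) * (fact n * (\<Prod>i = 0..<n. (fact i)^2)))
     / (\<Prod>s = 0..<\<alpha>. fact s)"
    unfolding Kbar_def K1 K2 K3 by simp
  also have "\<dots> = fact n * (\<Prod>j = 0..<n. (fact j)^2) *
     (((\<Prod>l = 0..<\<alpha>+1. (-1::real)^(n+l)) * (\<Prod>s = 0..<\<alpha>. (-1)^s)) * (\<Prod>l = 0..<\<alpha>+1. fact (n+l)) / (\<Prod>s = 0..<\<alpha>. fact s))"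
    unfolding K5 by (simp add: field_simps)
  also have "\<dots> = fact n * (\<Prod>j = 0..<n. (fact j)^2) * ((\<Prod>r = 0..<\<alpha>+1. d2 r) * (\<Prod>l = 0..<\<alpha>+1. d1 n l))"
    unfolding K4 d1 using nz by (simp add: field_simps)
  finally show ?thesis .
qed

theorem mainTheorem9:
  fixes n \<alpha> :: nat and a b :: real
  assumes "n \<ge> 1" and "a \<noteq> b"
  shows "Q n a b \<alpha> = Kbar n \<alpha> / (b - a) ^ \<alpha> *
    det (mat (\<alpha> + 1) (\<alpha> + 1) (\<lambda>(i, j).
          if j = 0 then laguerre 0 (int (n + i)) a
          else laguerre (j - 1) (int n + int i + 1 - int j) b))"
proof -
  have nz: "(b - a)^\<alpha> \<noteq> 0" using assms(2) by simp
  have H: "det (HM a b \<alpha> n) = det (RM a b \<alpha> n) * (\<Prod>j = 0..<n. (fact j)^2) / (b - a)^\<alpha>"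
    using alg_main[of b a \<alpha> n] nz by (simp add: field_simps)
  have "Q n a b \<alpha> = fact n * det (HM a b \<alpha> n)" by (rule Q_HM)
  also have "\<dots> = Kbar n \<alpha> / (b - a) ^ \<alpha> * det (TM a b \<alpha> n)"
    unfolding H det_RM Kbar_eq by (simp add: field_simps)
  finally show ?thesis by (simp add: TM_def)
qed

end
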